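(* Let $\mathcal{X},\mathcal{Y}$ be finite alphabets, let $W=W_{Y|X}$ be a channel from $\mathcal{X}$ to $\mathcal{Y}$, and for $P_0,P_1\in\Delta(\mathcal{X})$ let $Q_i(y)=\sum_x P_i(x)W(y|x)$. Then the SDPI coefficient $$\eta^J_\infty(W)=\sup_{P_0,P_1\in\Delta(\mathcal{X})}\frac{D^J_\infty(Q_0,Q_1)}{D^J_\infty(P_0,P_1)}$$ is achieved by binary input distributions, i.e., the supremum is unchanged when restricted to pairs $(P_0,P_1)$ supported on a common set of at most two elements of $\mathcal{X}$.
   Context: $\Delta(\mathcal{X})$ is the probability simplex on $\mathcal{X}$. $D_\infty(P\|Q)=\log\max_x\frac{P(x)}{Q(x)}$, and the Jeffreys–Rényi divergence of order infinity is $D^J_\infty(P,Q)=D_\infty(P\|Q)+D_\infty(Q\|P)$. *)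

theory Defs
  imports Complex_Main "HOL-Library.Extended_Real"
begin

definition pdist :: "('a::finite \<Rightarrow> real) \<Rightarrow> bool" where
  "pdist P \<longleftrightarrow> (\<forall>x. 0 \<le> P x) \<and> (\<Sum>x\<in>UNIV. P x) = 1"

text \<open>A channel W from 'x to 'y: W x y is the transition probability W(y|x).\<close>
definition channel :: "('x::finite \<Rightarrow> 'y::finite \<Rightarrow> real) \<Rightarrow> bool" where
  "channel W \<longleftrightarrow> (\<forall>x. pdist (W x))"

definition outdist :: "('x::finite \<Rightarrow> real) \<Rightarrow> ('x \<Rightarrow> 'y \<Rightarrow> real) \<Rightarrow> 'y \<Rightarrow> real" where
  "outdist P W y = (\<Sum>x\<in>UNIV. P x * W x y)"

definition Dinf :: "('a::finite \<Rightarrow> real) \<Rightarrow> ('a \<Rightarrow> real) \<Rightarrow> ereal" where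
  "Dinf P Q = (if \<exists>x. 0 < P x \<and> Q x = 0 then \<infinity>
               else ereal (ln (Max {P x / Q x | x. 0 < P x})))"

definition DJinf :: "('a::finite \<Rightarrow> real) \<Rightarrow> ('a \<Rightarrow> real) \<Rightarrow> ereal" where
  "DJinf P Q = Dinf P Q + Dinf Q P"

definition eta_J_on :: "(('x::finite \<Rightarrow> real) \<Rightarrow> ('x \<Rightarrow> real) \<Rightarrow> bool)
     \<Rightarrow> ('x \<Rightarrow> 'y::finite \<Rightarrow> real) \<Rightarrow> ereal" where
  "eta_J_on S W = Sup {DJinf (outdist P0 W) (outdist P1 W) / DJinf P0 P1 | P0 P1.
      S P0 P1 \<and> pdist P0 \<and> pdist P1 \<and> 0 < DJinf P0 P1 \<and> DJinf P0 P1 < \<infinity>}"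

definition eta_J :: "('x::finite \<Rightarrow> 'y::finite \<Rightarrow> real) \<Rightarrow> ereal" where
  "eta_J W = eta_J_on (\<lambda>_ _. True) W"

definition binary_support :: "('x \<Rightarrow> real) \<Rightarrow> ('x \<Rightarrow> real) \<Rightarrow> bool" where
  "binary_support P0 P1 \<longleftrightarrow> (\<exists>a b. {x. P0 x \<noteq> 0} \<subseteq> {a, b} \<and> {x. P1 x \<noteq> 0} \<subseteq> {a, b})"

end

theory Submission
  imports Defs
begin


lemma Dinf_fin:
  fixes P Q :: "'a::finite \<Rightarrow> real"
  assumes "\<forall>x. 0 < P x \<longrightarrow> 0 < Q x" "\<exists>x. 0 < P x"
  shows "\<exists>x0. 0 < P x0 \<and> Dinf P Q = ereal (ln (P x0 / Q x0)) \<and> (\<forall>x. 0 < P x \<longrightarrow> P x / Q x \<le> P x0 / Q x0)"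
proof -
  have nI: "\<not>(\<exists>x. 0 < P x \<and> Q x = 0)" using assms(1) by force
  define S where "S = {P x / Q x | x. 0 < P x}"
  have S: "S = (\<lambda>x. P x / Q x) ` {x. 0 < P x}" unfolding S_def by auto
  have fin: "finite S" unfolding S by simp
  have ne: "S \<noteq> {}" using assms(2) unfolding S by auto
  have "Max S \<in> S" using fin ne by (rule Max_in)
  then obtain x0 where x0: "0 < P x0" "Max S = P x0 / Q x0" unfolding S_def by auto
  have "\<forall>x. 0 < P x \<longrightarrow> P x / Q x \<le> P x0 / Q x0"
    using x0(2) fin unfolding S_def by (metis (mono_tags, lifting) Max_ge S S_def image_eqI mem_Collect_eq)
  moreover have "Dinf P Q = ereal (ln (P x0 / Q x0))"
    unfolding Dinf_def using nI x0(2) by (simp add: S_def)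
  ultimately show ?thesis using x0 by blast
qed

lemma Dinf_lower:
  fixes P Q :: "'a::finite \<Rightarrow> real"
  assumes "0 < P y" "0 < Q y"
  shows "ereal (ln (P y / Q y)) \<le> Dinf P Q"
proof (cases "\<exists>x. 0 < P x \<and> Q x = 0")
  case True then show ?thesis unfolding Dinf_def by simp
next
  case False
  define S where "S = {P x / Q x | x. 0 < P x}"
  have S: "S = (\<lambda>x. P x / Q x) ` {x. 0 < P x}" unfolding S_def by auto
  have fin: "finite S" unfolding S by simp
  have "P y / Q y \<in> S" using assms unfolding S_def by auto
  then have "P y / Q y \<le> Max S" using fin by simp
  moreover have "0 < P y / Q y" using assms by simp
  ultimately have "ln (P y / Q y) \<le> ln (Max S)" by (subst ln_le_cancel_iff) auto
  then show ?thesis unfolding Dinf_def using False by (simp add: S_def)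
qed

lemma phi_mono:
  fixes l a b c e :: real
  assumes "1 \<le> l" "0 \<le> a" "0 \<le> b" "0 \<le> c" "0 \<le> e" "0 < a + b" "0 < c + e" "c * b \<le> a * e"
  shows "(l*c + e)/(c + e) \<le> (l*a + b)/(a + b)"
proof -
  have "(l*c + e)*(a + b) \<le> (l*a + b)*(c + e)"
  proof -
    have "(l*a + b)*(c + e) - (l*c + e)*(a + b) = (l - 1)*(a*e - c*b)" by (simp add: algebra_simps)
    also have "\<dots> \<ge> 0" using assms by simp
    finally show ?thesis by simp
  qed
  then show ?thesis using assms by (simp add: divide_le_eq le_divide_eq mult.commute)
qed



lemma select:
  fixes f g c1 c2 :: "'a::finite \<Rightarrow> real"
  assumes nn: "\<And>x. 0 \<le> f x" "\<And>x. 0 \<le> g x" "\<And>x. 0 \<le> c1 x" "\<And>x. 0 \<le> c2 x"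
    and lt: "(\<Sum>x\<in>UNIV. f x * c2 x) * (\<Sum>x\<in>UNIV. g x * c1 x) < (\<Sum>x\<in>UNIV. f x * c1 x) * (\<Sum>x\<in>UNIV. g x * c2 x)"
  shows "\<exists>x1 x2. 0 < f x1 \<and> 0 < g x2 \<and> c2 x1 * c1 x2 < c1 x1 * c2 x2 \<and>
     c2 x1 * c1 x2 * ((\<Sum>x\<in>UNIV. f x * c1 x) * (\<Sum>x\<in>UNIV. g x * c2 x))
       \<le> c1 x1 * c2 x2 * ((\<Sum>x\<in>UNIV. f x * c2 x) * (\<Sum>x\<in>UNIV. g x * c1 x))"
proof -
  define A where "A = (\<lambda>x x'. c1 x * c2 x')"
  define B where "B = (\<lambda>x x'. c2 x * c1 x')"
  have prodA: "(\<Sum>x\<in>UNIV. f x * c1 x) * (\<Sum>x\<in>UNIV. g x * c2 x) = (\<Sum>x\<in>UNIV. \<Sum>x'\<in>UNIV. f x * g x' * A x x')"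
    unfolding A_def sum_product by (simp add: algebra_simps)
  have prodB: "(\<Sum>x\<in>UNIV. f x * c2 x) * (\<Sum>x\<in>UNIV. g x * c1 x) = (\<Sum>x\<in>UNIV. \<Sum>x'\<in>UNIV. f x * g x' * B x x')"
    unfolding B_def sum_product by (simp add: algebra_simps)
  have "0 < (\<Sum>x\<in>UNIV. \<Sum>x'\<in>UNIV. f x * g x' * A x x') - (\<Sum>x\<in>UNIV. \<Sum>x'\<in>UNIV. f x * g x' * B x x')"
    using lt prodA prodB by simp
  also have "\<dots> = (\<Sum>x\<in>UNIV. \<Sum>x'\<in>UNIV. f x * g x' * (A x x' - B x x'))"
    by (simp add: sum_subtractf[symmetric] algebra_simps)
  finally have "\<exists>x x'. 0 < f x * g x' * (A x x' - B x x')"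
    by (metis (no_types, lifting) not_less sum_nonpos)
  then obtain w w' where w: "0 < f w * g w' * (A w w' - B w w')" by blast
  have fgpos: "\<And>x x'. 0 \<le> f x * g x'" using nn by simp
  have ABnn: "\<And>x x'. 0 \<le> A x x'" "\<And>x x'. 0 \<le> B x x'" unfolding A_def B_def using nn by simp_all
  have wfg: "0 < f w * g w'" using w fgpos
    by (metis less_eq_real_def mult_eq_0_iff zero_less_mult_iff)
  have wAB: "B w w' < A w w'" using w wfg by (simp add: zero_less_mult_iff)
  define Pr where "Pr = {p. 0 < f (fst p) * g (snd p) \<and> 0 < A (fst p) (snd p) + B (fst p) (snd p)}"
  define key where "key = (\<lambda>p. A (fst p) (snd p) / (A (fst p) (snd p) + B (fst p) (snd p)))"
  have wP: "(w, w') \<in> Pr" unfolding Pr_def using wfg wAB ABnn[of w w'] by simp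
  have finK: "finite (key ` Pr)" by simp
  have "Max (key ` Pr) \<in> key ` Pr" using finK wP by (intro Max_in) auto
  then obtain p where pP: "p \<in> Pr" and pmax: "key p = Max (key ` Pr)" by auto
  have keymax: "\<And>q. q \<in> Pr \<Longrightarrow> key q \<le> key p" using pmax finK by simp
  obtain x1 x2 where p: "p = (x1, x2)" by (cases p)
  define As where "As = A x1 x2"
  define Bs where "Bs = B x1 x2"
  have sp: "0 < As + Bs" "0 < f x1 * g x2" using pP unfolding Pr_def p As_def Bs_def by auto
  have cross: "\<And>x x'. f x * g x' * (A x x' * Bs - As * B x x') \<le> 0"
  proof -
    fix x x'
    show "f x * g x' * (A x x' * Bs - As * B x x') \<le> 0"
    proof (cases "(x, x') \<in> Pr")
      case True
      have "key (x, x') \<le> key p" using keymax True by blast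
      then have "A x x' / (A x x' + B x x') \<le> As / (As + Bs)"
        unfolding key_def p As_def Bs_def by simp
      moreover have "0 < A x x' + B x x'" using True unfolding Pr_def by simp
      ultimately have "A x x' * (As + Bs) \<le> As * (A x x' + B x x')"
        using sp by (simp add: divide_le_eq le_divide_eq field_simps)
      then have "A x x' * Bs - As * B x x' \<le> 0" by (simp add: algebra_simps)
      then show ?thesis using fgpos[of x x'] by (simp add: mult_nonneg_nonpos)
    next
      case False
      then have "f x * g x' = 0 \<or> (A x x' = 0 \<and> B x x' = 0)"
        unfolding Pr_def using fgpos[of x x'] ABnn[of x x'] by auto
      then show ?thesis by auto
    qed
  qed
  have "(\<Sum>x\<in>UNIV. \<Sum>x'\<in>UNIV. f x * g x' * (A x x' * Bs - As * B x x')) \<le> 0"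
    by (intro sum_nonpos) (simp add: cross sum_nonpos)
  moreover have "(\<Sum>x\<in>UNIV. \<Sum>x'\<in>UNIV. f x * g x' * (A x x' * Bs - As * B x x'))
      = Bs * (\<Sum>x\<in>UNIV. \<Sum>x'\<in>UNIV. f x * g x' * A x x') - As * (\<Sum>x\<in>UNIV. \<Sum>x'\<in>UNIV. f x * g x' * B x x')"
    by (simp add: sum_subtractf sum_distrib_left algebra_simps)
  ultimately have ineq: "Bs * ((\<Sum>x\<in>UNIV. f x * c1 x) * (\<Sum>x\<in>UNIV. g x * c2 x)) \<le> As * ((\<Sum>x\<in>UNIV. f x * c2 x) * (\<Sum>x\<in>UNIV. g x * c1 x))"
    unfolding prodA prodB by simp
  have "key (w, w') \<le> key p" using keymax wP by blast
  moreover have "1/2 < key (w, w')" unfolding key_def using wAB ABnn[of w w'] by (simp add: field_simps)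
  ultimately have "1/2 < key p" by linarith
  then have "1/2 < As / (As + Bs)" unfolding key_def p As_def Bs_def by simp
  then have "Bs < As" using sp by (simp add: field_simps)
  have fx: "0 < f x1" "0 < g x2" using sp(2) nn(1)[of x1] nn(2)[of x2]
    by (metis less_eq_real_def mult_eq_0_iff)+
  show ?thesis
    apply (rule exI[of _ x1], rule exI[of _ x2])
    using fx \<open>Bs < As\<close> ineq unfolding As_def Bs_def A_def B_def by simp
qed



lemma sum_delta_mult:
  fixes h :: "'a::finite \<Rightarrow> real"
  shows "(\<Sum>x\<in>UNIV. (if x = a then c else 0) * h x) = c * h a"
proof -
  have "(\<Sum>x\<in>UNIV. (if x = a then c else 0) * h x) = (\<Sum>x\<in>UNIV. if x = a then c * h a else 0)"
    by (intro sum.cong) auto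
  then show ?thesis by simp
qed

lemma binary_pair:
  fixes W :: "'x::finite \<Rightarrow> 'y::finite \<Rightarrow> real"
  assumes "x1 \<noteq> x2" "1 < l" "0 < r"
  defines "P0 \<equiv> \<lambda>x. (if x = x1 then l*r/(l*r+1) else 0) + (if x = x2 then 1/(l*r+1) else 0)"
    and "P1 \<equiv> \<lambda>x. (if x = x1 then r/(r+1) else 0) + (if x = x2 then 1/(r+1) else 0)"
  shows "pdist P0" "pdist P1" "binary_support P0 P1" "DJinf P0 P1 = ereal (ln l)"
    "\<And>y. outdist P0 W y = (l*r*W x1 y + W x2 y)/(l*r+1)"
    "\<And>y. outdist P1 W y = (r*W x1 y + W x2 y)/(r+1)"
proof -
  have lr: "0 < l*r" using assms by simp
  have lr1: "l*r+1 \<noteq> 0" using lr by simp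
  show "pdist P0" unfolding pdist_def P0_def using assms lr lr1
    by (auto simp: sum.distrib add_divide_distrib[symmetric])
  show "pdist P1" unfolding pdist_def P1_def using assms
    by (auto simp: sum.distrib add_divide_distrib[symmetric])
  show "binary_support P0 P1" unfolding binary_support_def P0_def P1_def by auto
  show "\<And>y. outdist P0 W y = (l*r*W x1 y + W x2 y)/(l*r+1)"
    unfolding outdist_def P0_def by (simp add: distrib_right sum.distrib sum_delta_mult add_divide_distrib)
  show "\<And>y. outdist P1 W y = (r*W x1 y + W x2 y)/(r+1)"
    unfolding outdist_def P1_def by (simp add: distrib_right sum.distrib sum_delta_mult add_divide_distrib)
  have v0: "P0 x1 = l*r/(l*r+1)" "P0 x2 = 1/(l*r+1)" "\<And>x. x \<noteq> x1 \<Longrightarrow> x \<noteq> x2 \<Longrightarrow> P0 x = 0"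
    unfolding P0_def using assms(1) by auto
  have v1: "P1 x1 = r/(r+1)" "P1 x2 = 1/(r+1)" "\<And>x. x \<noteq> x1 \<Longrightarrow> x \<noteq> x2 \<Longrightarrow> P1 x = 0"
    unfolding P1_def using assms(1) by auto
  have supp: "\<And>x. 0 < P0 x \<longleftrightarrow> 0 < P1 x"
    by (metis v0 v1 assms lr less_irrefl divide_pos_pos zero_less_one add_pos_pos)
  have r1: "P0 x1 / P1 x1 = l*(r+1)/(l*r+1)" "P0 x2 / P1 x2 = (r+1)/(l*r+1)"
  proof -
    have "(l*r/(l*r+1))/(r/(r+1)) = (r*(l*(r+1)))/(r*(l*r+1))"
      by (simp add: divide_divide_times_eq algebra_simps)
    also have "\<dots> = l*(r+1)/(l*r+1)" using assms by (subst mult_divide_mult_cancel_left) auto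
    finally show "P0 x1 / P1 x1 = l*(r+1)/(l*r+1)" using v0 v1 by simp
    show "P0 x2 / P1 x2 = (r+1)/(l*r+1)" using v0 v1 by simp
  qed
  have r2: "P1 x1 / P0 x1 = (l*r+1)/(l*(r+1))" "P1 x2 / P0 x2 = (l*r+1)/(r+1)"
  proof -
    have "(r/(r+1))/(l*r/(l*r+1)) = (r*(l*r+1))/(r*(l*(r+1)))"
      by (simp add: divide_divide_times_eq algebra_simps)
    also have "\<dots> = (l*r+1)/(l*(r+1))" using assms by (subst mult_divide_mult_cancel_left) auto
    finally show "P1 x1 / P0 x1 = (l*r+1)/(l*(r+1))" using v0 v1 by simp
    show "P1 x2 / P0 x2 = (l*r+1)/(r+1)" using v0 v1 by simp
  qed
  have le1: "(r+1)/(l*r+1) \<le> l*(r+1)/(l*r+1)" using assms lr by (simp add: divide_right_mono)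
  have le2: "(l*r+1)/(l*(r+1)) \<le> (l*r+1)/(r+1)"
  proof -
    have "l*(r+1) - (r+1) = (l-1)*(r+1)" by (simp add: algebra_simps)
    also have "\<dots> \<ge> 0" using assms by simp
    finally have h1: "r+1 \<le> l*(r+1)" by simp
    have h2: "0 < l*(r+1) * (r+1)" using assms by simp
    show ?thesis using h1 h2 lr by (intro divide_left_mono) auto
  qed
  obtain a where a: "0 < P0 a" "Dinf P0 P1 = ereal (ln (P0 a / P1 a))"
      "\<forall>x. 0 < P0 x \<longrightarrow> P0 x / P1 x \<le> P0 a / P1 a"
    using Dinf_fin[of P0 P1] supp v0 lr by (metis divide_pos_pos zero_less_one add_pos_pos)
  have "P0 a / P1 a = l*(r+1)/(l*r+1)"
  proof -
    have "a = x1 \<or> a = x2" using a(1) v0(3) by force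
    moreover have "0 < P0 x1" using v0 lr by simp
    then have "P0 x1 / P1 x1 \<le> P0 a / P1 a" using a(3) by blast
    ultimately show ?thesis using r1 le1 by auto
  qed
  then have D0: "Dinf P0 P1 = ereal (ln (l*(r+1)/(l*r+1)))" using a by simp
  obtain b where b: "0 < P1 b" "Dinf P1 P0 = ereal (ln (P1 b / P0 b))"
      "\<forall>x. 0 < P1 x \<longrightarrow> P1 x / P0 x \<le> P1 b / P0 b"
    using Dinf_fin[of P1 P0] supp v1 assms by (metis divide_pos_pos zero_less_one add_pos_pos)
  have "P1 b / P0 b = (l*r+1)/(r+1)"
  proof -
    have "b = x1 \<or> b = x2" using b(1) v1(3) by force
    moreover have "0 < P1 x2" using v1 assms by simp
    then have "P1 x2 / P0 x2 \<le> P1 b / P0 b" using b(3) by blast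
    ultimately show ?thesis using r2 le2 by auto
  qed
  then have D1: "Dinf P1 P0 = ereal (ln ((l*r+1)/(r+1)))" using b by simp
  have "ln (l*(r+1)/(l*r+1)) + ln ((l*r+1)/(r+1)) = ln (l*(r+1)/(l*r+1) * ((l*r+1)/(r+1)))"
    using assms lr by (subst ln_mult) (auto intro!: divide_pos_pos add_pos_pos)
  also have "l*(r+1)/(l*r+1) * ((l*r+1)/(r+1)) = l"
  proof -
    have "l*(r+1)/(l*r+1) * ((l*r+1)/(r+1)) = ((l*r+1)*(l*(r+1))) / ((l*r+1)*(r+1))"
      by (simp add: times_divide_times_eq mult.commute)
    also have "\<dots> = (l*(r+1))/(r+1)" using lr1 by (subst mult_divide_mult_cancel_left) auto
    also have "\<dots> = l" using assms by simp
    finally show ?thesis .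
  qed
  finally show "DJinf P0 P1 = ereal (ln l)" unfolding DJinf_def D0 D1 by simp
qed



lemma ex_pos:
  fixes P :: "'a::finite \<Rightarrow> real"
  assumes "pdist P" shows "\<exists>x. 0 < P x"
proof (rule ccontr)
  assume "\<not> (\<exists>x. 0 < P x)"
  then have "\<And>x. P x = 0" using assms unfolding pdist_def by (meson antisym not_less)
  then show False using assms unfolding pdist_def by simp
qed

lemma choose_r:
  fixes w11 w12 w21 w22 al1 al2 be1 be2 fx gx :: real
  assumes nn: "0 \<le> w12" "0 \<le> w21" "0 \<le> al1" "0 \<le> al2" "0 \<le> be1" "0 \<le> be2"
    and p: "0 < w11" "0 < w22" "0 < fx" "0 < gx"
    and lb: "fx*w12 \<le> al2" "gx*w21 \<le> be1"
    and cr: "w12*w21*(al1*be2) \<le> w11*w22*(al2*be1)"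
  shows "\<exists>r>0. al1*w21 \<le> r*w11*be1 \<and> r*w12*be2 \<le> al2*w22"
proof -
  have z1: "al2 = 0 \<Longrightarrow> w12 = 0" using lb(1) p(3) nn(1) by (simp add: mult_le_0_iff)
  have z2: "be1 = 0 \<Longrightarrow> w21 = 0" using lb(2) p(4) nn(2) by (simp add: mult_le_0_iff)
  show ?thesis
  proof (cases "0 < be1 \<and> 0 < w21*al1")
    case True
    define r where "r = w21*al1/(w11*be1)"
    have rpos: "0 < r" unfolding r_def using True p by simp
    have i: "al1*w21 \<le> r*w11*be1" unfolding r_def using True p by (simp add: field_simps)
    have ii: "r*w12*be2 \<le> al2*w22"
    proof (cases "al2 = 0 \<or> w12*be2 = 0")
      case True
      then show ?thesis using z1 nn p by (auto simp: mult.assoc)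
    next
      case False
      have "r*w12*be2 = (w12*w21*(al1*be2))/(w11*be1)" unfolding r_def by (simp add: field_simps)
      also have "\<dots> \<le> (w11*w22*(al2*be1))/(w11*be1)" using cr True p by (intro divide_right_mono) auto
      also have "\<dots> = al2*w22" using True p by (simp add: field_simps)
      finally show ?thesis .
    qed
    show ?thesis using rpos i ii by blast
  next
    case F1: False
    have i0: "\<And>r. 0 < r \<Longrightarrow> al1*w21 \<le> r*w11*be1"
    proof -
      fix r :: real assume "0 < r"
      have "0 \<le> r*w11*be1" using \<open>0 < r\<close> p nn by simp
      moreover have "al1*w21 = 0"
      proof (cases "be1 = 0")
        case True then show ?thesis using z2 by simp
      next
        case False
        then have "0 < be1" using nn(5) by simp
        then have "\<not> 0 < w21*al1" using F1 by simp
        moreover have "0 \<le> w21*al1" using nn by simp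
        ultimately show ?thesis by (simp add: mult.commute)
      qed
      ultimately show "al1*w21 \<le> r*w11*be1" by (metis mult_zero_left mult_zero_right)
    qed
    show ?thesis
    proof (cases "0 < al2 \<and> 0 < w12*be2")
      case True
      define r where "r = al2*w22/(w12*be2)"
      have rpos: "0 < r" unfolding r_def using True p by simp
      have ne: "w12*be2 \<noteq> 0" using True by (metis less_irrefl)
      have "r*w12*be2 = r*(w12*be2)" by (simp add: mult.assoc)
      also have "\<dots> = al2*w22" unfolding r_def using ne by simp
      finally have "r*w12*be2 = al2*w22" .
      then show ?thesis using rpos i0[OF rpos] by (intro exI[of _ r]) simp
    next
      case False
      have "1*w12*be2 \<le> al2*w22"
      proof -
        have "w12*be2 = 0"
        proof (cases "al2 = 0")
          case True then show ?thesis using z1 by simp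
        next
          case False2: False
          then have "0 < al2" using nn(4) by simp
          then have "\<not> 0 < w12*be2" using False by simp
          moreover have "0 \<le> w12*be2" using nn by simp
          ultimately show ?thesis by simp
        qed
        moreover have "0 \<le> al2*w22" using nn p by simp
        ultimately show ?thesis by auto
      qed
      then show ?thesis using i0[of 1] by (intro exI[of _ 1]) simp
    qed
  qed
qed



lemma binary_exists:
  fixes W :: "'x::finite \<Rightarrow> 'y::finite \<Rightarrow> real"
  assumes Wnn: "\<And>x y. 0 \<le> W x y" and "x1 \<noteq> x2" "1 < l" "0 < r"
    and py1: "0 < r*W x1 y1 + W x2 y1" and py2: "0 < r*W x1 y2 + W x2 y2"
  shows "\<exists>P0' P1'. binary_support P0' P1' \<and> pdist P0' \<and> pdist P1' \<and> DJinf P0' P1' = ereal (ln l) \<and>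
     ereal (ln (l*(r*W x1 y1) + W x2 y1) - ln (r*W x1 y1 + W x2 y1)
            - ln (l*(r*W x1 y2) + W x2 y2) + ln (r*W x1 y2 + W x2 y2))
       \<le> DJinf (outdist P0' W) (outdist P1' W)"
proof -
  define P0 where "P0 \<equiv> \<lambda>x. (if x = x1 then l*r/(l*r+1) else 0) + (if x = x2 then 1/(l*r+1) else 0)"
  define P1 where "P1 \<equiv> \<lambda>x. (if x = x1 then r/(r+1) else 0) + (if x = x2 then 1/(r+1) else 0)"
  note bp = binary_pair[OF assms(2-4), folded P0_def P1_def]
  define a where "a = (\<lambda>y. r*W x1 y)"
  define b where "b = (\<lambda>y. W x2 y)"
  have lr: "0 < l*r+1" "0 < r+1" using assms by (simp_all add: add_pos_pos)
  have Q0: "\<And>y. outdist P0 W y = (l*a y + b y)/(l*r+1)" unfolding a_def b_def by (simp add: bp(5) mult.assoc)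
  have Q1: "\<And>y. outdist P1 W y = (a y + b y)/(r+1)" unfolding a_def b_def by (simp add: bp(6))
  have ab: "\<And>y. 0 \<le> a y" "\<And>y. 0 \<le> b y" unfolding a_def b_def using Wnn assms by simp_all
  have lab: "\<And>y. 0 < a y + b y \<Longrightarrow> 0 < l*a y + b y"
  proof -
    fix y assume "0 < a y + b y"
    moreover have "0 \<le> (l-1) * a y" using ab(1)[of y] assms by simp
    then have "a y \<le> l * a y" by (simp add: algebra_simps)
    ultimately show "0 < l*a y + b y" by linarith
  qed
  have pa1: "0 < a y1 + b y1" and pa2: "0 < a y2 + b y2" using py1 py2 unfolding a_def b_def by simp_all
  have q01: "0 < outdist P0 W y1" "0 < outdist P1 W y1" using Q0 Q1 lab pa1 lr by simp_all
  have q02: "0 < outdist P0 W y2" "0 < outdist P1 W y2" using Q0 Q1 lab pa2 lr by simp_all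
  have L1: "ereal (ln (outdist P0 W y1 / outdist P1 W y1)) \<le> Dinf (outdist P0 W) (outdist P1 W)"
    using q01 by (intro Dinf_lower)
  have L2: "ereal (ln (outdist P1 W y2 / outdist P0 W y2)) \<le> Dinf (outdist P1 W) (outdist P0 W)"
    using q02 by (intro Dinf_lower)
  have lnQ0: "\<And>y. 0 < a y + b y \<Longrightarrow> ln (outdist P0 W y) = ln (l*a y + b y) - ln (l*r+1)"
  proof -
    fix y assume h: "0 < a y + b y"
    have "0 < l*a y + b y" by (rule lab[OF h])
    then show "ln (outdist P0 W y) = ln (l*a y + b y) - ln (l*r+1)" using lr by (simp add: Q0 ln_div)
  qed
  have lnQ1: "\<And>y. 0 < a y + b y \<Longrightarrow> ln (outdist P1 W y) = ln (a y + b y) - ln (r+1)"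
    using lr by (simp add: Q1 ln_div)
  have "ln (outdist P0 W y1 / outdist P1 W y1) + ln (outdist P1 W y2 / outdist P0 W y2)
     = ln (l*a y1 + b y1) - ln (a y1 + b y1) - ln (l*a y2 + b y2) + ln (a y2 + b y2)"
    using q01 q02 lnQ0[OF pa1] lnQ1[OF pa1] lnQ0[OF pa2] lnQ1[OF pa2] by (simp add: ln_div)
  then have "ereal (ln (l*a y1 + b y1) - ln (a y1 + b y1) - ln (l*a y2 + b y2) + ln (a y2 + b y2))
      \<le> DJinf (outdist P0 W) (outdist P1 W)"
    unfolding DJinf_def using add_mono[OF L1 L2] by simp
  then show ?thesis using bp(1-4) unfolding a_def b_def by (intro exI[of _ P0] exI[of _ P1]) simp
qed



lemma Dinf_not_minf: "Dinf P Q \<noteq> -\<infinity>"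
  unfolding Dinf_def by simp

lemma main:
  fixes W :: "'x::finite \<Rightarrow> 'y::finite \<Rightarrow> real" and P0 P1 :: "'x \<Rightarrow> real"
  assumes ch: "channel W" and p0: "pdist P0" and p1: "pdist P1"
    and pos: "0 < DJinf P0 P1" and fin: "DJinf P0 P1 < \<infinity>"
  shows "\<exists>P0' P1'. binary_support P0' P1' \<and> pdist P0' \<and> pdist P1' \<and> DJinf P0' P1' = DJinf P0 P1 \<and>
    DJinf (outdist P0 W) (outdist P1 W) \<le> DJinf (outdist P0' W) (outdist P1' W)"
proof -
  have nn0: "\<And>x. 0 \<le> P0 x" using p0 unfolding pdist_def by simp
  have nn1: "\<And>x. 0 \<le> P1 x" using p1 unfolding pdist_def by simp
  have Wnn: "\<And>x y. 0 \<le> W x y" using ch unfolding channel_def pdist_def by simp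
  have Wp: "\<And>x. pdist (W x)" using ch unfolding channel_def by simp
  have d01: "Dinf P0 P1 \<noteq> \<infinity>" and d10: "Dinf P1 P0 \<noteq> \<infinity>"
    using fin Dinf_not_minf[of P0 P1] Dinf_not_minf[of P1 P0] unfolding DJinf_def by auto
  have s01: "\<forall>x. 0 < P0 x \<longrightarrow> 0 < P1 x"
  proof -
    have "\<not>(\<exists>x. 0 < P0 x \<and> P1 x = 0)" using d01 unfolding Dinf_def by (auto split: if_splits)
    then show ?thesis using nn1 by (metis less_eq_real_def)
  qed
  have s10: "\<forall>x. 0 < P1 x \<longrightarrow> 0 < P0 x"
  proof -
    have "\<not>(\<exists>x. 0 < P1 x \<and> P0 x = 0)" using d10 unfolding Dinf_def by (auto split: if_splits)
    then show ?thesis using nn0 by (metis less_eq_real_def)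
  qed
  obtain xa where xa: "0 < P0 xa" "Dinf P0 P1 = ereal (ln (P0 xa / P1 xa))"
      "\<forall>x. 0 < P0 x \<longrightarrow> P0 x / P1 x \<le> P0 xa / P1 xa"
    using Dinf_fin[of P0 P1] s01 ex_pos[OF p0] by blast
  obtain xb where xb: "0 < P1 xb" "Dinf P1 P0 = ereal (ln (P1 xb / P0 xb))"
      "\<forall>x. 0 < P1 x \<longrightarrow> P1 x / P0 x \<le> P1 xb / P0 xb"
    using Dinf_fin[of P1 P0] s10 ex_pos[OF p1] by blast
  define M0 where "M0 = P0 xa / P1 xa"
  define M1 where "M1 = P1 xb / P0 xb"
  have M0p: "0 < M0" unfolding M0_def using xa(1) s01 by simp
  have M1p: "0 < M1" unfolding M1_def using xb(1) s10 by simp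
  define l where "l = M0 * M1"
  have lp: "0 < l" unfolding l_def using M0p M1p by simp
  have lnl: "ln l = ln M0 + ln M1" unfolding l_def using M0p M1p by (simp add: ln_mult)
  have DJ: "DJinf P0 P1 = ereal (ln l)"
    unfolding DJinf_def xa(2) xb(2) lnl M0_def M1_def by simp
  have l1: "1 < l" using pos lp unfolding DJ by simp
  have b0: "\<And>x. P0 x \<le> M0 * P1 x"
  proof -
    fix x show "P0 x \<le> M0 * P1 x"
    proof (cases "0 < P0 x")
      case True
      then have "P0 x / P1 x \<le> M0" using xa(3) unfolding M0_def by blast
      moreover have "0 < P1 x" using True s01 by blast
      ultimately show ?thesis by (simp add: divide_le_eq)
    next
      case False
      then show ?thesis using nn0[of x] nn1[of x] M0p by simp
    qed
  qed
  have b1: "\<And>x. P1 x \<le> M1 * P0 x"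
  proof -
    fix x show "P1 x \<le> M1 * P0 x"
    proof (cases "0 < P1 x")
      case True
      then have "P1 x / P0 x \<le> M1" using xb(3) unfolding M1_def by blast
      moreover have "0 < P0 x" using True s10 by blast
      ultimately show ?thesis by (simp add: divide_le_eq)
    next
      case False
      then show ?thesis using nn0[of x] nn1[of x] M1p by simp
    qed
  qed
  define m where "m = 1 / M1"
  have mp: "0 < m" unfolding m_def using M1p by simp
  have M0lm: "M0 = l * m" unfolding l_def m_def using M1p by simp
  define Q0 where "Q0 = outdist P0 W"
  define Q1 where "Q1 = outdist P1 W"
  have Q0nn: "\<And>y. 0 \<le> Q0 y" unfolding Q0_def outdist_def using nn0 Wnn by (simp add: sum_nonneg)
  have Q1nn: "\<And>y. 0 \<le> Q1 y" unfolding Q1_def outdist_def using nn1 Wnn by (simp add: sum_nonneg)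
  have Qb0: "\<And>y. Q0 y \<le> M0 * Q1 y"
    unfolding Q0_def Q1_def outdist_def sum_distrib_left
    by (intro sum_mono) (simp add: mult.assoc[symmetric] mult_right_mono b0 Wnn)
  have Qb1: "\<And>y. Q1 y \<le> M1 * Q0 y"
    unfolding Q0_def Q1_def outdist_def sum_distrib_left
    by (intro sum_mono) (simp add: mult.assoc[symmetric] mult_right_mono b1 Wnn)
  have sQ01: "\<forall>y. 0 < Q0 y \<longrightarrow> 0 < Q1 y"
    using Qb0 M0p Q1nn by (metis less_eq_real_def less_le_trans mult_zero_right)
  have sQ10: "\<forall>y. 0 < Q1 y \<longrightarrow> 0 < Q0 y"
    using Qb1 M1p Q0nn by (metis less_eq_real_def less_le_trans mult_zero_right)
  obtain y0 where y0: "0 < W xa y0" using ex_pos[OF Wp[of xa]] by blast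
  have "P0 xa * W xa y0 \<le> Q0 y0" unfolding Q0_def outdist_def
    by (rule member_le_sum) (auto simp: nn0 Wnn)
  then have Q0y0: "0 < Q0 y0" using xa(1) y0 by (meson less_le_trans mult_pos_pos)
  obtain y1 where y1: "0 < Q0 y1" "Dinf Q0 Q1 = ereal (ln (Q0 y1 / Q1 y1))"
    using Dinf_fin[of Q0 Q1] sQ01 Q0y0 by blast
  obtain y2 where y2: "0 < Q1 y2" "Dinf Q1 Q0 = ereal (ln (Q1 y2 / Q0 y2))"
    using Dinf_fin[of Q1 Q0] sQ10 sQ01 Q0y0 by blast
  have y1' : "0 < Q1 y1" using y1(1) sQ01 by blast
  have y2' : "0 < Q0 y2" using y2(1) sQ10 by blast
  define N where "N = ln (Q0 y1 / Q1 y1) + ln (Q1 y2 / Q0 y2)"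
  have DJQ: "DJinf Q0 Q1 = ereal N" unfolding DJinf_def N_def y1(2) y2(2) by simp
  define f where "f = (\<lambda>x. P0 x - m * P1 x)"
  define g where "g = (\<lambda>x. M0 * P1 x - P0 x)"
  have fnn: "\<And>x. 0 \<le> f x"
  proof -
    fix x
    have "P1 x / M1 \<le> P0 x" using b1[of x] M1p by (simp add: divide_le_eq mult.commute)
    then show "0 \<le> f x" unfolding f_def m_def by simp
  qed
  have gnn: "\<And>x. 0 \<le> g x" unfolding g_def using b0 by simp
  define al where "al = (\<lambda>y. \<Sum>x\<in>UNIV. f x * W x y)"
  define be where "be = (\<lambda>y. \<Sum>x\<in>UNIV. g x * W x y)"
  have al_eq: "\<And>y. al y = Q0 y - m * Q1 y"
    unfolding al_def f_def Q0_def Q1_def outdist_def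
    by (simp add: sum_distrib_left sum_subtractf[symmetric] algebra_simps)
  have be_eq: "\<And>y. be y = M0 * Q1 y - Q0 y"
    unfolding be_def g_def Q0_def Q1_def outdist_def
    by (simp add: sum_distrib_left sum_subtractf[symmetric] algebra_simps)
  have alnn: "\<And>y. 0 \<le> al y" unfolding al_def using fnn Wnn by (simp add: sum_nonneg)
  have benn: "\<And>y. 0 \<le> be y" unfolding be_def using gnn Wnn by (simp add: sum_nonneg)
  have idQ0: "\<And>y. (l-1) * Q0 y = l * al y + be y" unfolding al_eq be_eq M0lm by (simp add: algebra_simps)
  have idQ1: "\<And>y. (m*(l-1)) * Q1 y = al y + be y" unfolding al_eq be_eq M0lm by (simp add: algebra_simps)
  have lnQ0: "\<And>y. 0 < Q0 y \<Longrightarrow> ln (Q0 y) = ln (l * al y + be y) - ln (l-1)"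
  proof -
    fix y assume h: "0 < Q0 y"
    have "Q0 y = (l * al y + be y) / (l-1)" using idQ0[of y] l1 by (simp add: field_simps)
    moreover have "0 < l * al y + be y" using idQ0[of y] h l1 by (metis diff_gt_0_iff_gt mult_pos_pos)
    ultimately show "ln (Q0 y) = ln (l * al y + be y) - ln (l-1)" using l1 by (simp add: ln_div)
  qed
  have lnQ1: "\<And>y. 0 < Q1 y \<Longrightarrow> ln (Q1 y) = ln (al y + be y) - ln (m*(l-1))"
  proof -
    fix y assume h: "0 < Q1 y"
    have mlp: "0 < m*(l-1)" using mp l1 by simp
    have "Q1 y = ((m*(l-1)) * Q1 y) / (m*(l-1))" using mp l1 by simp
    then have "Q1 y = (al y + be y) / (m*(l-1))" using idQ1[of y] by simp
    moreover have "0 < al y + be y" using idQ1[of y] h mlp by (metis mult_pos_pos)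
    ultimately show "ln (Q1 y) = ln (al y + be y) - ln (m*(l-1))" using mlp mp l1 by (simp add: ln_div)
  qed
  have Nexp: "N = ln (l * al y1 + be y1) - ln (al y1 + be y1) - ln (l * al y2 + be y2) + ln (al y2 + be y2)"
    unfolding N_def using y1(1) y1' y2(1) y2' lnQ0[of y1] lnQ1[of y1] lnQ0[of y2] lnQ1[of y2]
    by (simp add: ln_div)
  have pab1: "0 < al y1 + be y1" and pab2: "0 < al y2 + be y2"
    using idQ1[of y1] idQ1[of y2] y1' y2(1) mp l1 by (metis diff_gt_0_iff_gt mult_pos_pos)+
  have plab: "\<And>y. 0 < al y + be y \<Longrightarrow> 0 < l * al y + be y"
  proof -
    fix y assume "0 < al y + be y"
    moreover have "0 \<le> (l-1) * al y" using alnn[of y] l1 by simp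
    ultimately show "0 < l * al y + be y" by (simp add: algebra_simps)
  qed
  show ?thesis
  proof (cases "al y2 * be y1 < al y1 * be y2")
    case True
    have "\<exists>x1 x2. 0 < f x1 \<and> 0 < g x2 \<and> W x1 y2 * W x2 y1 < W x1 y1 * W x2 y2 \<and>
       W x1 y2 * W x2 y1 * (al y1 * be y2) \<le> W x1 y1 * W x2 y2 * (al y2 * be y1)"
      using select[of f g "\<lambda>x. W x y1" "\<lambda>x. W x y2"] True fnn gnn Wnn unfolding al_def be_def by blast
    then obtain x1 x2 where sel: "0 < f x1" "0 < g x2" "W x1 y2 * W x2 y1 < W x1 y1 * W x2 y2"
       "W x1 y2 * W x2 y1 * (al y1 * be y2) \<le> W x1 y1 * W x2 y2 * (al y2 * be y1)" by blast
    have w11: "0 < W x1 y1" and w22: "0 < W x2 y2"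
      using sel(3) Wnn[of x1 y2] Wnn[of x2 y1] Wnn[of x1 y1] Wnn[of x2 y2]
      by (metis less_eq_real_def mult_eq_0_iff mult_nonneg_nonneg not_less zero_less_mult_iff)+
    have x12: "x1 \<noteq> x2" using sel(3) by (auto simp: mult.commute)
    have lbf: "\<And>y. f x1 * W x1 y \<le> al y" unfolding al_def
      by (rule member_le_sum) (auto simp: fnn Wnn)
    have lbg: "\<And>y. g x2 * W x2 y \<le> be y" unfolding be_def
      by (rule member_le_sum) (auto simp: gnn Wnn)
    obtain r where r: "0 < r" "al y1 * W x2 y1 \<le> r * W x1 y1 * be y1" "r * W x1 y2 * be y2 \<le> al y2 * W x2 y2"
      using choose_r[of "W x1 y2" "W x2 y1" "al y1" "al y2" "be y1" "be y2" "W x1 y1" "W x2 y2" "f x1" "g x2"]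
        Wnn alnn benn w11 w22 sel(1,2) lbf lbg sel(4) by (auto simp: mult.commute mult.left_commute)
    have py1: "0 < r*W x1 y1 + W x2 y1" using r(1) w11 Wnn[of x2 y1] by (simp add: add_pos_nonneg)
    have py2: "0 < r*W x1 y2 + W x2 y2" using r(1) w22 Wnn[of x1 y2] by (simp add: add_nonneg_pos)
    obtain P0' P1' where bp: "binary_support P0' P1'" "pdist P0'" "pdist P1'" "DJinf P0' P1' = ereal (ln l)"
      "ereal (ln (l*(r*W x1 y1) + W x2 y1) - ln (r*W x1 y1 + W x2 y1)
            - ln (l*(r*W x1 y2) + W x2 y2) + ln (r*W x1 y2 + W x2 y2))
       \<le> DJinf (outdist P0' W) (outdist P1' W)"
      using binary_exists[OF Wnn x12 l1 r(1) py1 py2] by blast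
    have m1: "(l * al y1 + be y1)/(al y1 + be y1) \<le> (l*(r*W x1 y1) + W x2 y1)/(r*W x1 y1 + W x2 y1)"
      using phi_mono[of l "r*W x1 y1" "W x2 y1" "al y1" "be y1"] l1 r(1) w11 Wnn[of x2 y1] alnn benn py1 pab1 r(2)
      by (simp add: mult.commute mult.left_commute)
    have m2: "(l*(r*W x1 y2) + W x2 y2)/(r*W x1 y2 + W x2 y2) \<le> (l * al y2 + be y2)/(al y2 + be y2)"
      using phi_mono[of l "al y2" "be y2" "r*W x1 y2" "W x2 y2"] l1 r(1) w22 Wnn[of x1 y2] alnn benn py2 pab2 r(3)
      by (simp add: mult.commute mult.left_commute)
    have lm1: "ln ((l * al y1 + be y1)/(al y1 + be y1)) \<le> ln ((l*(r*W x1 y1) + W x2 y1)/(r*W x1 y1 + W x2 y1))"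
      using m1 pab1 plab[OF pab1] by (intro ln_mono) auto
    have py2': "0 < l*(r*W x1 y2) + W x2 y2"
    proof -
      have "0 \<le> (l-1)*(r*W x1 y2)" using l1 r(1) Wnn[of x1 y2] by simp
      then show ?thesis using py2 by (simp add: algebra_simps)
    qed
    have lm2: "ln ((l*(r*W x1 y2) + W x2 y2)/(r*W x1 y2 + W x2 y2)) \<le> ln ((l * al y2 + be y2)/(al y2 + be y2))"
      using m2 py2 py2' by (intro ln_mono) auto
    have py1': "0 < l*(r*W x1 y1) + W x2 y1"
    proof -
      have "0 \<le> (l-1)*(r*W x1 y1)" using l1 r(1) Wnn[of x1 y1] by simp
      then show ?thesis using py1 by (simp add: algebra_simps)
    qed
    have "N \<le> ln (l*(r*W x1 y1) + W x2 y1) - ln (r*W x1 y1 + W x2 y1)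
            - ln (l*(r*W x1 y2) + W x2 y2) + ln (r*W x1 y2 + W x2 y2)"
      using lm1 lm2 unfolding Nexp using pab1 pab2 plab[OF pab1] plab[OF pab2] py1 py2 py1' py2'
      by (simp add: ln_div)
    then have "DJinf Q0 Q1 \<le> DJinf (outdist P0' W) (outdist P1' W)"
      unfolding DJQ using bp(5) by (meson ereal_less_eq(3) order_trans)
    then show ?thesis using bp(1-4) DJ unfolding Q0_def Q1_def by metis
  next
    case False
    have xab: "xa \<noteq> xb"
    proof
      assume "xa = xb"
      moreover have "0 < P1 xa" using xa(1) s01 by blast
      ultimately have "l = 1" unfolding l_def M0_def M1_def using xa(1) by simp
      then show False using l1 by simp
    qed
    obtain y where y: "0 < W xa y" using ex_pos[OF Wp[of xa]] by blast
    have py: "0 < 1*W xa y + W xb y" using y Wnn[of xb y] by simp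
    obtain P0' P1' where bp: "binary_support P0' P1'" "pdist P0'" "pdist P1'" "DJinf P0' P1' = ereal (ln l)"
      "ereal (ln (l*(1*W xa y) + W xb y) - ln (1*W xa y + W xb y)
            - ln (l*(1*W xa y) + W xb y) + ln (1*W xa y + W xb y))
       \<le> DJinf (outdist P0' W) (outdist P1' W)"
      using binary_exists[where W=W and ?x1.0=xa and ?x2.0=xb and l=l and r=1 and ?y1.0=y and ?y2.0=y, OF Wnn xab l1 zero_less_one py py] by blast
    have m: "(l * al y1 + be y1)/(al y1 + be y1) \<le> (l * al y2 + be y2)/(al y2 + be y2)"
      using phi_mono[of l "al y2" "be y2" "al y1" "be y1"] l1 alnn benn pab1 pab2 False
      by (simp add: mult.commute)
    have "ln ((l * al y1 + be y1)/(al y1 + be y1)) \<le> ln ((l * al y2 + be y2)/(al y2 + be y2))"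
      using m pab1 plab[OF pab1] by (intro ln_mono) auto
    then have "N \<le> 0"
      unfolding Nexp using pab1 pab2 plab[OF pab1] plab[OF pab2] by (simp add: ln_div)
    then have "DJinf Q0 Q1 \<le> DJinf (outdist P0' W) (outdist P1' W)"
    proof -
      have "ereal N \<le> ereal 0" using \<open>N \<le> 0\<close> by simp
      also have "\<dots> \<le> DJinf (outdist P0' W) (outdist P1' W)" using bp(5) by simp
      finally show ?thesis unfolding DJQ .
    qed
    then show ?thesis using bp(1-4) DJ unfolding Q0_def Q1_def by metis
  qed
qed



theorem theorem4p3:
  fixes W :: "'x::finite \<Rightarrow> 'y::finite \<Rightarrow> real"
  assumes "channel W"
  shows "eta_J W = eta_J_on binary_support W"
proof -
  define A where "A = {DJinf (outdist P0 W) (outdist P1 W) / DJinf P0 P1 | P0 P1.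
      (\<lambda>_ _. True) P0 P1 \<and> pdist P0 \<and> pdist P1 \<and> 0 < DJinf P0 P1 \<and> DJinf P0 P1 < \<infinity>}"
  define B where "B = {DJinf (outdist P0 W) (outdist P1 W) / DJinf P0 P1 | P0 P1.
      binary_support P0 P1 \<and> pdist P0 \<and> pdist P1 \<and> 0 < DJinf P0 P1 \<and> DJinf P0 P1 < \<infinity>}"
  have eA: "eta_J W = Sup A" unfolding eta_J_def eta_J_on_def A_def ..
  have eB: "eta_J_on binary_support W = Sup B" unfolding eta_J_on_def B_def ..
  have "B \<subseteq> A" unfolding A_def B_def by blast
  then have le1: "Sup B \<le> Sup A" by (rule Sup_subset_mono)
  have le2: "Sup A \<le> Sup B"
  proof (rule Sup_least)
    fix e assume "e \<in> A"
    then obtain P0 P1 where e: "e = DJinf (outdist P0 W) (outdist P1 W) / DJinf P0 P1"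
      and p: "pdist P0" "pdist P1" "0 < DJinf P0 P1" "DJinf P0 P1 < \<infinity>"
      unfolding A_def by blast
    obtain P0' P1' where q: "binary_support P0' P1'" "pdist P0'" "pdist P1'" "DJinf P0' P1' = DJinf P0 P1"
      "DJinf (outdist P0 W) (outdist P1 W) \<le> DJinf (outdist P0' W) (outdist P1' W)"
      using main[OF assms p] by blast
    have "e \<le> DJinf (outdist P0' W) (outdist P1' W) / DJinf P0' P1'"
      unfolding e q(4) using q(5) p(3) by (rule ereal_divide_right_mono)
    also have "\<dots> \<le> Sup B"
    proof (rule Sup_upper)
      have "0 < DJinf P0' P1'" "DJinf P0' P1' < \<infinity>" using q(4) p(3,4) by simp_all
      then show "DJinf (outdist P0' W) (outdist P1' W) / DJinf P0' P1' \<in> B"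
        unfolding B_def using q(1-3) by blast
    qed
    finally show "e \<le> Sup B" .
  qed
  show ?thesis using eA eB le1 le2 by simp
qed

end
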